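(* Let $N\ge2$, $2_\ast<p<2^\ast$, and $Q\in L^\infty(\mathbb{R}^N)$, $Q\not\equiv0$, nonnegative and $\mathbb{Z}^N$-periodic. Let $\mathcal{K}=\{v\in L^{p'}(\mathbb{R}^N): J'(v)=0\}$, and suppose that $\mathcal{K}$ consists of only finitely many orbits $\mathcal{O}(w)=\{w(\cdot-y):y\in\mathbb{Z}^N\}$. Then $$\kappa:=\inf\{\|v-w\|_{p'}: v,w\in\mathcal{K},\ v\neq w\}>0.$$
   Context: $2_\ast=\frac{2(N+1)}{N-1}$, $2^\ast=\frac{2N}{N-2}$ ($N\ge3$), $2^\ast=\infty$ ($N=2$), $p'=p/(p-1)$. $\mathbf{R}:L^{p'}(\mathbb{R}^N)\to L^p(\mathbb{R}^N)$ is the bounded extension of $f\mapsto \mathrm{Re}(\Phi)\ast f$, where $\Phi(x)=\frac{i}{4}(2\pi|x|)^{-\frac{N-2}{2}}H^{(1)}_{\frac{N-2}{2}}(|x|)$ is the outgoing fundamental solution of $-\Delta-1$. $\mathbf{K}v=Q^{1/p}\mathbf{R}(Q^{1/p}v)$ and $J(v)=\frac1{p'}\|v\|_{p'}^{p'}-\frac12\int v\,\mathbf{K}(v)\,dx$ on $L^{p'}(\mathbb{R}^N)$, a $C^1$ functional with $J'(v)w=\int(|v|^{p'-2}v-\mathbf{K}(v))w\,dx$. *)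

theory Defs
  imports "HOL-Analysis.Analysis"
begin

definition memLp :: "real \<Rightarrow> (real^'n \<Rightarrow> real) \<Rightarrow> bool" where
  "memLp q f \<longleftrightarrow> f \<in> borel_measurable lebesgue \<and> integrable lebesgue (\<lambda>x. \<bar>f x\<bar> powr q)"

definition Lp_norm :: "real \<Rightarrow> (real^'n \<Rightarrow> real) \<Rightarrow> real" where
  "Lp_norm q f = (\<integral>x. \<bar>f x\<bar> powr q \<partial>lebesgue) powr (1 / q)"

definition conj_exp :: "real \<Rightarrow> real" where
  "conj_exp p = p / (p - 1)"

definition ae_eq :: "(real^'n \<Rightarrow> real) \<Rightarrow> (real^'n \<Rightarrow> real) \<Rightarrow> bool" where
  "ae_eq f g \<longleftrightarrow> (AE x in lebesgue. f x = g x)"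

definition int_lattice :: "(real^'n) set" where
  "int_lattice = {y. \<forall>i. y $ i \<in> \<int>}"

definition ess_bounded :: "(real^'n \<Rightarrow> real) \<Rightarrow> bool" where
  "ess_bounded Q \<longleftrightarrow> Q \<in> borel_measurable lebesgue \<and> (\<exists>C. AE x in lebesgue. \<bar>Q x\<bar> \<le> C)"

definition lower_crit :: "nat \<Rightarrow> real" where
  "lower_crit N = 2 * (real N + 1) / (real N - 1)"

definition below_upper_crit :: "nat \<Rightarrow> real \<Rightarrow> bool" where
  "below_upper_crit N p \<longleftrightarrow> (N = 2 \<or> p < 2 * real N / (real N - 2))"

section \<open>Bessel and Hankel functions (integral representations, DLMF 10.9.6/10.9.7, x > 0)\<close>

definition besselJ :: "real \<Rightarrow> real \<Rightarrow> real" where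
  "besselJ \<nu> x = (1/pi) * (LBINT \<theta>=0..pi. cos (x * sin \<theta> - \<nu> * \<theta>))
      - (sin (\<nu> * pi) / pi) * (LINT t:{0..}|lborel. exp (- x * sinh t - \<nu> * t))"

definition besselY :: "real \<Rightarrow> real \<Rightarrow> real" where
  "besselY \<nu> x = (1/pi) * (LBINT \<theta>=0..pi. sin (x * sin \<theta> - \<nu> * \<theta>))
      - (1/pi) * (LINT t:{0..}|lborel. (exp (\<nu> * t) + exp (- \<nu> * t) * cos (\<nu> * pi)) * exp (- x * sinh t))"

definition hankel1 :: "real \<Rightarrow> real \<Rightarrow> complex" where
  "hankel1 \<nu> x = Complex (besselJ \<nu> x) (besselY \<nu> x)"

text \<open>Outgoing fundamental solution of -Delta - 1 on R^N, N = CARD('n).\<close>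
definition Phi :: "real^'n \<Rightarrow> complex" where
  "Phi x = (\<i> / 4) * of_real ((2 * pi * norm x) powr (- (real CARD('n) - 2) / 2))
            * hankel1 ((real CARD('n) - 2) / 2) (norm x)"

definition convolution :: "(real^'n \<Rightarrow> real) \<Rightarrow> (real^'n \<Rightarrow> real) \<Rightarrow> real^'n \<Rightarrow> real" where
  "convolution g f x = (\<integral>y. g (x - y) * f y \<partial>lebesgue)"

definition cont_compact_supp :: "(real^'n \<Rightarrow> real) \<Rightarrow> bool" where
  "cont_compact_supp f \<longleftrightarrow> continuous_on UNIV f \<and> bounded {x. f x \<noteq> 0}"

text \<open>R is (a representative of) the bounded linear extension L^{p'} -> L^p of
  f \<mapsto> Re(Phi) * f, initially defined on continuous compactly supported f.\<close>
definition is_R :: "real \<Rightarrow> ((real^'n \<Rightarrow> real) \<Rightarrow> (real^'n \<Rightarrow> real)) \<Rightarrow> bool" where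
  "is_R p R \<longleftrightarrow>
     (\<forall>f. memLp (conj_exp p) f \<longrightarrow> memLp p (R f)) \<and>
     (\<forall>f g. memLp (conj_exp p) f \<longrightarrow> memLp (conj_exp p) g \<longrightarrow> ae_eq f g \<longrightarrow> ae_eq (R f) (R g)) \<and>
     (\<forall>f g a b. memLp (conj_exp p) f \<longrightarrow> memLp (conj_exp p) g \<longrightarrow>
         ae_eq (R (\<lambda>x. a * f x + b * g x)) (\<lambda>x. a * R f x + b * R g x)) \<and>
     (\<exists>C. \<forall>f. memLp (conj_exp p) f \<longrightarrow> Lp_norm p (R f) \<le> C * Lp_norm (conj_exp p) f) \<and>
     (\<forall>f. cont_compact_supp f \<longrightarrow> ae_eq (R f) (convolution (\<lambda>x. Re (Phi x)) f))"

definition K_op :: "real \<Rightarrow> (real^'n \<Rightarrow> real) \<Rightarrow> ((real^'n \<Rightarrow> real) \<Rightarrow> (real^'n \<Rightarrow> real))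
                    \<Rightarrow> (real^'n \<Rightarrow> real) \<Rightarrow> (real^'n \<Rightarrow> real)" where
  "K_op p Q R v = (\<lambda>x. Q x powr (1/p) * R (\<lambda>y. Q y powr (1/p) * v y) x)"

definition J_deriv :: "real \<Rightarrow> (real^'n \<Rightarrow> real) \<Rightarrow> ((real^'n \<Rightarrow> real) \<Rightarrow> (real^'n \<Rightarrow> real))
                    \<Rightarrow> (real^'n \<Rightarrow> real) \<Rightarrow> (real^'n \<Rightarrow> real) \<Rightarrow> real" where
  "J_deriv p Q R v w = (\<integral>x. (\<bar>v x\<bar> powr (conj_exp p - 2) * v x - K_op p Q R v x) * w x \<partial>lebesgue)"

definition crit_set :: "real \<Rightarrow> (real^'n \<Rightarrow> real) \<Rightarrow> ((real^'n \<Rightarrow> real) \<Rightarrow> (real^'n \<Rightarrow> real))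
                    \<Rightarrow> (real^'n \<Rightarrow> real) set" where
  "crit_set p Q R = {v. memLp (conj_exp p) v \<and>
      (\<forall>w. memLp (conj_exp p) w \<longrightarrow> J_deriv p Q R v w = 0)}"

definition orbit :: "(real^'n \<Rightarrow> real) \<Rightarrow> (real^'n \<Rightarrow> real) set" where
  "orbit w = {v. \<exists>y\<in>int_lattice. ae_eq v (\<lambda>x. w (x - y))}"

end

theory Submission
  imports Defs
begin

lemma id_leb[measurable]: "(\<lambda>x::'a::euclidean_space. x) \<in> borel_measurable lebesgue"
  using id_borel_measurable_lebesgue by (simp add: id_def)


lemma lebesgue_transl: "distr lebesgue lebesgue (\<lambda>x::'a::euclidean_space. t + x) = lebesgue"
  and transl_meas: "(\<lambda>x::'a::euclidean_space. t + x) \<in> lebesgue \<rightarrow>\<^sub>M lebesgue"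
proof -
  have e: "(\<lambda>x::'a. t + (\<Sum>j\<in>Basis. (1 * (x \<bullet> j)) *\<^sub>R j)) = (\<lambda>x. t + x)"
    by (simp add: euclidean_representation)
  show "(\<lambda>x::'a::euclidean_space. t + x) \<in> lebesgue \<rightarrow>\<^sub>M lebesgue"
    using lebesgue_affine_measurable[of "\<lambda>_. 1" t] unfolding e by simp
  show "distr lebesgue lebesgue (\<lambda>x::'a::euclidean_space. t + x) = lebesgue"
    using lebesgue_affine_euclidean[of "\<lambda>_. 1" t] unfolding e by (simp add: density_1)
qed

lemma meas_transl:
  fixes f :: "'a::euclidean_space \<Rightarrow> real"
  assumes "f \<in> borel_measurable lebesgue"
  shows "(\<lambda>x. f (t + x)) \<in> borel_measurable lebesgue"
    and "(\<lambda>x. f (x - t)) \<in> borel_measurable lebesgue"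
proof -
  show "(\<lambda>x. f (t + x)) \<in> borel_measurable lebesgue"
    using measurable_compose[OF transl_meas assms] by simp
  have "(\<lambda>x. f ((-t) + x)) \<in> borel_measurable lebesgue"
    using measurable_compose[OF transl_meas[of "-t"] assms] by simp
  moreover have "(\<lambda>x. f (x - t)) = (\<lambda>x. f ((-t) + x))" by (simp add: algebra_simps)
  ultimately show "(\<lambda>x. f (x - t)) \<in> borel_measurable lebesgue" by (simp only:)
qed

lemma integral_transl:
  fixes h :: "'a::euclidean_space \<Rightarrow> real"
  assumes "h \<in> borel_measurable lebesgue"
  shows "integral\<^sup>L lebesgue (\<lambda>x. h (t + x)) = integral\<^sup>L lebesgue h"
  using integral_distr[OF transl_meas assms, of t] lebesgue_transl[of t] by simp

lemma integrable_transl: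
  fixes h :: "'a::euclidean_space \<Rightarrow> real"
  assumes "h \<in> borel_measurable lebesgue"
  shows "integrable lebesgue (\<lambda>x. h (t + x)) = integrable lebesgue h"
  using integrable_distr_eq[OF transl_meas assms, of t] lebesgue_transl[of t] by simp

lemma AE_transl:
  fixes P :: "'a::euclidean_space \<Rightarrow> bool"
  assumes "Measurable.pred lebesgue P" "AE x in lebesgue. P x"
  shows "AE x in lebesgue. P (t + x)"
  using AE_distr_iff[OF transl_meas assms(1)[unfolded pred_def], of t] assms(2) unfolding lebesgue_transl by simp

lemma pow_ineq:
  fixes q s t :: real
  assumes q: "q \<ge> 1" and s: "s \<ge> 0" and t: "t \<ge> 0"
  shows "(s + t) powr q \<le> 2 powr (q - 1) * (s powr q + t powr q)"
proof -
  have two: "2 powr (q - 1) \<ge> 1" using q by (simp add: ge_one_powr_ge_zero)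
  consider "s = 0" | "t = 0" | "s > 0" "t > 0" using s t by linarith
  then show ?thesis
  proof cases
    case 1 then show ?thesis using mult_right_mono[OF two powr_ge_zero[of t q]] by simp
  next
    case 2 then show ?thesis using mult_right_mono[OF two powr_ge_zero[of s q]] by simp
  next
    case 3
    have c: "((1 - 1/2) *\<^sub>R s + (1/2) *\<^sub>R t) powr q \<le> (1 - 1/2) * s powr q + (1/2) * t powr q"
      using convex_onD[OF powr_convex[OF q], of "1/2" s t] 3 by simp
    have "(s + t) powr q = (2 * ((s + t)/2)) powr q" by (rule arg_cong[where f="\<lambda>x. x powr q"]) simp
    also have "\<dots> = 2 powr q * ((s+t)/2) powr q"
      using 3 by (subst powr_mult) auto
    also have "\<dots> \<le> 2 powr q * ((s powr q + t powr q)/2)"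
      using c by (intro mult_left_mono) (auto simp: field_simps)
    also have "\<dots> = 2 powr (q - 1) * (s powr q + t powr q)"
      by (simp add: powr_diff)
    finally show ?thesis .
  qed
qed

lemma pow_ineq2:
  fixes q a b :: real
  assumes q: "q \<ge> 1"
  shows "2 powr (1 - q) * \<bar>a\<bar> powr q - \<bar>b\<bar> powr q \<le> \<bar>b - a\<bar> powr q"
proof -
  have "\<bar>a\<bar> powr q \<le> (\<bar>b - a\<bar> + \<bar>b\<bar>) powr q"
    using q by (intro powr_mono2) auto
  also have "\<dots> \<le> 2 powr (q - 1) * (\<bar>b - a\<bar> powr q + \<bar>b\<bar> powr q)"
    by (rule pow_ineq[OF q]) auto
  finally have h: "\<bar>a\<bar> powr q \<le> 2 powr (q - 1) * (\<bar>b - a\<bar> powr q + \<bar>b\<bar> powr q)" .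
  have e: "2 powr (1 - q) * 2 powr (q - 1) = 1" by (simp add: powr_add[symmetric])
  have "2 powr (1 - q) * \<bar>a\<bar> powr q \<le> 2 powr (1 - q) * (2 powr (q - 1) * (\<bar>b - a\<bar> powr q + \<bar>b\<bar> powr q))"
    using h by (intro mult_left_mono) auto
  also have "\<dots> = \<bar>b - a\<bar> powr q + \<bar>b\<bar> powr q"
    using e by (simp add: mult.assoc[symmetric])
  finally show ?thesis by simp
qed


definition Iq :: "real \<Rightarrow> (real^'n \<Rightarrow> real) \<Rightarrow> (real^'n \<Rightarrow> real) \<Rightarrow> real^'n \<Rightarrow> real" where
  "Iq q f g d = (\<integral>x. \<bar>f (x - d) - g x\<bar> powr q \<partial>lebesgue)"

lemma integrable_transl2:
  fixes h :: "'a::euclidean_space \<Rightarrow> real"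
  assumes "h \<in> borel_measurable lebesgue"
  shows "integrable lebesgue (\<lambda>x. h (x - t)) = integrable lebesgue h"
proof -
  have "(\<lambda>x. h (x - t)) = (\<lambda>x. h ((-t) + x))" by (simp add: algebra_simps)
  then show ?thesis using integrable_transl[OF assms, of "-t"] by simp
qed

lemma integrable_if:
  fixes h :: "real^'n \<Rightarrow> real"
  assumes hi: "integrable lebesgue h" and [measurable]: "Measurable.pred lebesgue P"
  shows "integrable lebesgue (\<lambda>x. if P x then h x else 0)"
proof (rule Bochner_Integration.integrable_bound[OF hi])
  have [measurable]: "h \<in> borel_measurable lebesgue" using hi by auto
  show "(\<lambda>x. if P x then h x else 0) \<in> borel_measurable lebesgue" by measurable
  show "AE x in lebesgue. norm (if P x then h x else 0) \<le> norm (h x)" by auto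
qed

lemma memLp_meas: "memLp q f \<Longrightarrow> f \<in> borel_measurable lebesgue"
  and memLp_int: "memLp q f \<Longrightarrow> integrable lebesgue (\<lambda>x. \<bar>f x\<bar> powr q)"
  by (auto simp: memLp_def)

lemma integrable_diffq:
  fixes f g :: "real^'n \<Rightarrow> real"
  assumes q: "q \<ge> 1" and f: "memLp q f" and g: "memLp q g"
  shows "integrable lebesgue (\<lambda>x. \<bar>f (x - d) - g x\<bar> powr q)"
proof -
  have fm[measurable]: "f \<in> borel_measurable lebesgue" using memLp_meas[OF f] .
  have gm[measurable]: "g \<in> borel_measurable lebesgue" using memLp_meas[OF g] .
  have fdm[measurable]: "(\<lambda>x. f (x - d)) \<in> borel_measurable lebesgue" by (rule meas_transl(2)[OF fm])
  have fdi: "integrable lebesgue (\<lambda>x. \<bar>f (x - d)\<bar> powr q)"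
    using integrable_transl2[of "\<lambda>x. \<bar>f x\<bar> powr q" d] memLp_int[OF f] by simp
  have bi: "integrable lebesgue (\<lambda>x. 2 powr (q - 1) * (\<bar>f (x - d)\<bar> powr q + \<bar>g x\<bar> powr q))"
    by (intro integrable_mult_right Bochner_Integration.integrable_add fdi memLp_int[OF g])
  show ?thesis
  proof (rule Bochner_Integration.integrable_bound[OF bi])
    show "(\<lambda>x. \<bar>f (x - d) - g x\<bar> powr q) \<in> borel_measurable lebesgue" by measurable
    show "AE x in lebesgue. norm (\<bar>f (x - d) - g x\<bar> powr q) \<le> norm (2 powr (q - 1) * (\<bar>f (x - d)\<bar> powr q + \<bar>g x\<bar> powr q))"
    proof (rule AE_I2)
      fix x
      have "\<bar>f (x - d) - g x\<bar> powr q \<le> (\<bar>f (x - d)\<bar> + \<bar>g x\<bar>) powr q"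
        using q by (intro powr_mono2) auto
      also have "\<dots> \<le> 2 powr (q - 1) * (\<bar>f (x - d)\<bar> powr q + \<bar>g x\<bar> powr q)"
        by (rule pow_ineq[OF q]) auto
      finally show "norm (\<bar>f (x - d) - g x\<bar> powr q) \<le> norm (2 powr (q - 1) * (\<bar>f (x - d)\<bar> powr q + \<bar>g x\<bar> powr q))"
        by simp
    qed
  qed
qed

lemma tail_small:
  fixes f :: "real^'n \<Rightarrow> real"
  assumes f: "memLp q f" and e: "e > 0"
  shows "\<exists>n::nat. (\<integral>x. (if real n \<le> norm x then \<bar>f x\<bar> powr q else 0) \<partial>lebesgue) < e"
proof -
  have fm[measurable]: "f \<in> borel_measurable lebesgue" using memLp_meas[OF f] .
  have lim: "(\<lambda>n::nat. \<integral>x. (if real n \<le> norm x then \<bar>f x\<bar> powr q else 0) \<partial>lebesgue)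
      \<longlonglongrightarrow> (\<integral>(x::real^'n). (0::real) \<partial>lebesgue)"
  proof (rule Bochner_Integration.integral_dominated_convergence[where w="\<lambda>x. \<bar>f x\<bar> powr q"])
    show "(\<lambda>x::real^'n. 0::real) \<in> borel_measurable lebesgue" by simp
    show "\<And>n::nat. (\<lambda>x. if real n \<le> norm x then \<bar>f x\<bar> powr q else 0) \<in> borel_measurable lebesgue"
      by measurable
    show "integrable lebesgue (\<lambda>x. \<bar>f x\<bar> powr q)" using memLp_int[OF f] .
    show "AE x in lebesgue. (\<lambda>n::nat. if real n \<le> norm x then \<bar>f x\<bar> powr q else 0) \<longlonglongrightarrow> 0"
    proof (rule AE_I2, rule tendsto_eventually)
      fix x :: "real^'n"
      obtain N :: nat where N: "norm x < real N" using reals_Archimedean2 by blast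
      show "\<forall>\<^sub>F n in sequentially. (if real n \<le> norm x then \<bar>f x\<bar> powr q else 0) = 0"
        unfolding eventually_sequentially
        by (rule exI[of _ N]) (use N in auto)
    qed
    show "\<And>n::nat. AE x in lebesgue. norm (if real n \<le> norm x then \<bar>f x\<bar> powr q else 0) \<le> \<bar>f x\<bar> powr q"
      by auto
  qed
  then have "\<forall>\<^sub>F n in sequentially. (\<integral>x. (if real n \<le> norm x then \<bar>f x\<bar> powr q else 0) \<partial>lebesgue) < e"
    using e by (intro order_tendstoD(2)) auto
  then show ?thesis unfolding eventually_sequentially by auto
qed

lemma head_big:
  fixes g :: "real^'n \<Rightarrow> real"
  assumes g: "memLp q g" and a: "a < (\<integral>x. \<bar>g x\<bar> powr q \<partial>lebesgue)"
  shows "\<exists>n::nat. a < (\<integral>x. (if norm x \<le> real n then \<bar>g x\<bar> powr q else 0) \<partial>lebesgue)"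
proof -
  have gm[measurable]: "g \<in> borel_measurable lebesgue" using memLp_meas[OF g] .
  have lim: "(\<lambda>n::nat. \<integral>x. (if norm x \<le> real n then \<bar>g x\<bar> powr q else 0) \<partial>lebesgue)
      \<longlonglongrightarrow> (\<integral>x. \<bar>g x\<bar> powr q \<partial>lebesgue)"
  proof (rule Bochner_Integration.integral_dominated_convergence[where w="\<lambda>x. \<bar>g x\<bar> powr q"])
    show "(\<lambda>x. \<bar>g x\<bar> powr q) \<in> borel_measurable lebesgue" by measurable
    show "\<And>n::nat. (\<lambda>x. if norm x \<le> real n then \<bar>g x\<bar> powr q else 0) \<in> borel_measurable lebesgue"
      by measurable
    show "integrable lebesgue (\<lambda>x. \<bar>g x\<bar> powr q)" using memLp_int[OF g] .
    show "AE x in lebesgue. (\<lambda>n::nat. if norm x \<le> real n then \<bar>g x\<bar> powr q else 0) \<longlonglongrightarrow> \<bar>g x\<bar> powr q"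
    proof (rule AE_I2, rule tendsto_eventually)
      fix x :: "real^'n"
      obtain N :: nat where N: "norm x < real N" using reals_Archimedean2 by blast
      show "\<forall>\<^sub>F n in sequentially. (if norm x \<le> real n then \<bar>g x\<bar> powr q else 0) = \<bar>g x\<bar> powr q"
        unfolding eventually_sequentially
        by (rule exI[of _ N]) (use N in auto)
    qed
    show "\<And>n::nat. AE x in lebesgue. norm (if norm x \<le> real n then \<bar>g x\<bar> powr q else 0) \<le> \<bar>g x\<bar> powr q"
      by auto
  qed
  then have "\<forall>\<^sub>F n in sequentially. a < (\<integral>x. (if norm x \<le> real n then \<bar>g x\<bar> powr q else 0) \<partial>lebesgue)"
    using a by (intro order_tendstoD(1)) auto
  then show ?thesis unfolding eventually_sequentially by auto
qed


lemma integral_transl2: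
  fixes h :: "'a::euclidean_space \<Rightarrow> real"
  assumes "h \<in> borel_measurable lebesgue"
  shows "integral\<^sup>L lebesgue (\<lambda>x. h (x - t)) = integral\<^sup>L lebesgue h"
proof -
  have "(\<lambda>x. h (x - t)) = (\<lambda>x. h ((-t) + x))" by (simp add: algebra_simps)
  then show ?thesis using integral_transl[OF assms, of "-t"] by simp
qed

lemma sep_far:
  fixes f g :: "real^'n \<Rightarrow> real"
  assumes q: "q \<ge> 1" and f: "memLp q f" and g: "memLp q g"
    and Gpos: "0 < (\<integral>x. \<bar>g x\<bar> powr q \<partial>lebesgue)"
  shows "\<exists>c>0. \<exists>R. \<forall>d. R \<le> norm d \<longrightarrow> c \<le> Iq q f g d"
proof -
  define G where "G = (\<integral>x. \<bar>g x\<bar> powr q \<partial>lebesgue)"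
  define a where "a = (2::real) powr (1 - q)"
  have a: "a > 0" unfolding a_def by simp
  have G: "G > 0" using Gpos G_def by simp
  have fm[measurable]: "f \<in> borel_measurable lebesgue" using memLp_meas[OF f] .
  have gm[measurable]: "g \<in> borel_measurable lebesgue" using memLp_meas[OF g] .
  obtain n1 :: nat where n1: "G/2 < (\<integral>x. (if norm x \<le> real n1 then \<bar>g x\<bar> powr q else 0) \<partial>lebesgue)"
    using head_big[OF g, of "G/2"] G G_def by auto
  obtain n2 :: nat where n2: "(\<integral>x. (if real n2 \<le> norm x then \<bar>f x\<bar> powr q else 0) \<partial>lebesgue) < a * G / 4"
    using tail_small[OF f, of "a * G / 4"] a G by auto
  have cpos: "0 < a * G / 4" using a G by simp
  have "\<forall>d. real n1 + real n2 \<le> norm d \<longrightarrow> a * G / 4 \<le> Iq q f g d"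
  proof (intro allI impI)
    fix d :: "real^'n"
    assume d: "real n1 + real n2 \<le> norm d"
    have fdm[measurable]: "(\<lambda>x. f (x - d)) \<in> borel_measurable lebesgue" by (rule meas_transl(2)[OF fm])
    have fdi: "integrable lebesgue (\<lambda>x. \<bar>f (x - d)\<bar> powr q)"
      using integrable_transl2[of "\<lambda>x. \<bar>f x\<bar> powr q" d] memLp_int[OF f] by simp
    have gi: "integrable lebesgue (\<lambda>x. \<bar>g x\<bar> powr q)" using memLp_int[OF g] .
    have fi: "integrable lebesgue (\<lambda>x. \<bar>f x\<bar> powr q)" using memLp_int[OF f] .
    have di: "integrable lebesgue (\<lambda>x. \<bar>f (x - d) - g x\<bar> powr q)"
      by (rule integrable_diffq[OF q f g])
    have pB[measurable]: "Measurable.pred lebesgue (\<lambda>x::real^'n. norm x \<le> real n1)" by measurable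
    have pT[measurable]: "Measurable.pred lebesgue (\<lambda>x::real^'n. real n2 \<le> norm x)" by measurable
    have t1: "(\<integral>x. (if norm x \<le> real n1 then \<bar>f (x - d)\<bar> powr q else 0) \<partial>lebesgue)
        \<le> (\<integral>x. (if real n2 \<le> norm x then \<bar>f x\<bar> powr q else 0) \<partial>lebesgue)"
    proof -
      have hm: "(\<lambda>x. if norm x \<le> real n1 then \<bar>f (x - d)\<bar> powr q else 0) \<in> borel_measurable lebesgue"
        by measurable
      have "(\<integral>x. (if norm x \<le> real n1 then \<bar>f (x - d)\<bar> powr q else 0) \<partial>lebesgue)
          = (\<integral>x. (if norm (d + x) \<le> real n1 then \<bar>f x\<bar> powr q else 0) \<partial>lebesgue)"
        using integral_transl[OF hm, of d] unfolding add_diff_cancel_left' by (rule sym)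
      also have "\<dots> \<le> (\<integral>x. (if real n2 \<le> norm x then \<bar>f x\<bar> powr q else 0) \<partial>lebesgue)"
      proof (rule integral_mono)
        have "Measurable.pred lebesgue (\<lambda>x::real^'n. norm (d + x) \<le> real n1)" by measurable
        then show "integrable lebesgue (\<lambda>x. if norm (d + x) \<le> real n1 then \<bar>f x\<bar> powr q else 0)"
          by (rule integrable_if[OF fi])
        show "integrable lebesgue (\<lambda>x. if real n2 \<le> norm x then \<bar>f x\<bar> powr q else 0)"
          by (rule integrable_if[OF fi pT])
        fix x :: "real^'n"
        have "norm d \<le> norm (d + x) + norm x" using norm_triangle_ineq4[of "d + x" x] by simp
        then show "(if norm (d + x) \<le> real n1 then \<bar>f x\<bar> powr q else 0) \<le> (if real n2 \<le> norm x then \<bar>f x\<bar> powr q else 0)"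
          using d by auto
      qed
      finally show ?thesis .
    qed
    have hi: "integrable lebesgue (\<lambda>x. a * \<bar>g x\<bar> powr q - \<bar>f (x - d)\<bar> powr q)"
      by (intro Bochner_Integration.integrable_diff integrable_mult_right gi fdi)
    have t2: "(\<integral>x. (if norm x \<le> real n1 then a * \<bar>g x\<bar> powr q - \<bar>f (x - d)\<bar> powr q else 0) \<partial>lebesgue)
        = a * (\<integral>x. (if norm x \<le> real n1 then \<bar>g x\<bar> powr q else 0) \<partial>lebesgue)
          - (\<integral>x. (if norm x \<le> real n1 then \<bar>f (x - d)\<bar> powr q else 0) \<partial>lebesgue)"
    proof -
      have "(\<lambda>x. if norm x \<le> real n1 then a * \<bar>g x\<bar> powr q - \<bar>f (x - d)\<bar> powr q else 0)
        = (\<lambda>x. a * (if norm x \<le> real n1 then \<bar>g x\<bar> powr q else 0) - (if norm x \<le> real n1 then \<bar>f (x - d)\<bar> powr q else 0))"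
        by auto
      moreover have "(\<integral>x. a * (if norm x \<le> real n1 then \<bar>g x\<bar> powr q else 0) - (if norm x \<le> real n1 then \<bar>f (x - d)\<bar> powr q else 0) \<partial>lebesgue)
         = (\<integral>x. a * (if norm x \<le> real n1 then \<bar>g x\<bar> powr q else 0) \<partial>lebesgue) - (\<integral>x. (if norm x \<le> real n1 then \<bar>f (x - d)\<bar> powr q else 0) \<partial>lebesgue)"
        by (intro Bochner_Integration.integral_diff integrable_mult_right integrable_if[OF gi pB] integrable_if[OF fdi pB])
      ultimately show ?thesis by simp
    qed
    have t3: "(\<integral>x. (if norm x \<le> real n1 then a * \<bar>g x\<bar> powr q - \<bar>f (x - d)\<bar> powr q else 0) \<partial>lebesgue)
        \<le> (\<integral>x. (if norm x \<le> real n1 then \<bar>f (x - d) - g x\<bar> powr q else 0) \<partial>lebesgue)"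
    proof (rule integral_mono)
      show "integrable lebesgue (\<lambda>x. if norm x \<le> real n1 then a * \<bar>g x\<bar> powr q - \<bar>f (x - d)\<bar> powr q else 0)"
        by (rule integrable_if[OF hi pB])
      show "integrable lebesgue (\<lambda>x. if norm x \<le> real n1 then \<bar>f (x - d) - g x\<bar> powr q else 0)"
        by (rule integrable_if[OF di pB])
      fix x :: "real^'n"
      show "(if norm x \<le> real n1 then a * \<bar>g x\<bar> powr q - \<bar>f (x - d)\<bar> powr q else 0)
          \<le> (if norm x \<le> real n1 then \<bar>f (x - d) - g x\<bar> powr q else 0)"
        using pow_ineq2[OF q, of "g x" "f (x - d)"] unfolding a_def by auto
    qed
    have t4: "(\<integral>x. (if norm x \<le> real n1 then \<bar>f (x - d) - g x\<bar> powr q else 0) \<partial>lebesgue) \<le> Iq q f g d"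
      unfolding Iq_def
    proof (rule integral_mono)
      show "integrable lebesgue (\<lambda>x. if norm x \<le> real n1 then \<bar>f (x - d) - g x\<bar> powr q else 0)"
        by (rule integrable_if[OF di pB])
      show "integrable lebesgue (\<lambda>x. \<bar>f (x - d) - g x\<bar> powr q)" by (rule di)
      fix x :: "real^'n"
      show "(if norm x \<le> real n1 then \<bar>f (x - d) - g x\<bar> powr q else 0) \<le> \<bar>f (x - d) - g x\<bar> powr q"
        by auto
    qed
    have "a * (G / 2) < a * (\<integral>x. (if norm x \<le> real n1 then \<bar>g x\<bar> powr q else 0) \<partial>lebesgue)"
      using n1 a by (intro mult_strict_left_mono) auto
    then show "a * G / 4 \<le> Iq q f g d"
      using t1 t2 t3 t4 n2 by linarith
  qed
  then show ?thesis using cpos by blast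
qed


lemma Iq_swap:
  fixes f g :: "real^'n \<Rightarrow> real"
  assumes fm[measurable]: "f \<in> borel_measurable lebesgue" and gm[measurable]: "g \<in> borel_measurable lebesgue"
  shows "Iq q f g d = Iq q g f (-d)"
proof -
  have fdm[measurable]: "(\<lambda>x. f (x - d)) \<in> borel_measurable lebesgue" by (rule meas_transl(2)[OF fm])
  have hm: "(\<lambda>x. \<bar>f (x - d) - g x\<bar> powr q) \<in> borel_measurable lebesgue" by measurable
  have "Iq q f g d = (\<integral>x. \<bar>f (d + x - d) - g (d + x)\<bar> powr q \<partial>lebesgue)"
    unfolding Iq_def using integral_transl[OF hm, of d] by (rule sym)
  also have "\<dots> = Iq q g f (-d)"
    unfolding Iq_def add_diff_cancel_left' by (simp add: abs_minus_commute add.commute)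
  finally show ?thesis .
qed

lemma int0_ae:
  fixes h :: "real^'n \<Rightarrow> real"
  assumes hm[measurable]: "h \<in> borel_measurable lebesgue" and hi: "integrable lebesgue (\<lambda>x. \<bar>h x\<bar> powr q)"
    and z: "(\<integral>x. \<bar>h x\<bar> powr q \<partial>lebesgue) = 0"
  shows "AE x in lebesgue. h x = 0"
proof -
  have "AE x in lebesgue. \<bar>h x\<bar> powr q = 0"
    using integral_nonneg_eq_0_iff_AE[OF hi] z by auto
  then show ?thesis by auto
qed

lemma Iq_pos:
  fixes f g :: "real^'n \<Rightarrow> real"
  assumes q: "q \<ge> 1" and f: "memLp q f" and g: "memLp q g"
    and ne: "\<not> ae_eq (\<lambda>x. f (x - d)) g"
  shows "0 < Iq q f g d"
proof -
  have fm[measurable]: "f \<in> borel_measurable lebesgue" using memLp_meas[OF f] .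
  have gm[measurable]: "g \<in> borel_measurable lebesgue" using memLp_meas[OF g] .
  have fdm[measurable]: "(\<lambda>x. f (x - d)) \<in> borel_measurable lebesgue" by (rule meas_transl(2)[OF fm])
  have ge: "0 \<le> Iq q f g d" unfolding Iq_def by (rule integral_nonneg_AE) auto
  moreover have "Iq q f g d \<noteq> 0"
  proof
    assume "Iq q f g d = 0"
    then have "AE x in lebesgue. f (x - d) - g x = 0"
      by (intro int0_ae[where q=q] integrable_diffq[OF q f g]) (auto simp: Iq_def)
    then have "ae_eq (\<lambda>x. f (x - d)) g" unfolding ae_eq_def by auto
    with ne show False by simp
  qed
  ultimately show ?thesis by simp
qed

lemma both_zero:
  fixes f g :: "real^'n \<Rightarrow> real"
  assumes fm[measurable]: "f \<in> borel_measurable lebesgue" and gm[measurable]: "g \<in> borel_measurable lebesgue"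
    and f0: "AE x in lebesgue. f x = 0" and g0: "AE x in lebesgue. g x = 0"
  shows "ae_eq (\<lambda>x. f (x - d)) g"
proof -
  have "Measurable.pred lebesgue (\<lambda>x. f x = 0)" by measurable
  from AE_transl[OF this f0, of "-d"] have "AE x in lebesgue. f (x - d) = 0" by simp
  with g0 show ?thesis unfolding ae_eq_def by eventually_elim simp
qed

lemma lattice_ball_finite:
  "finite {d::real^'n. d \<in> int_lattice \<and> norm d \<le> R}"
proof -
  define M where "M = \<lceil>R\<rceil>"
  let ?S = "(\<lambda>h. \<chi> i. real_of_int (h i)) ` (PiE (UNIV::'n set) (\<lambda>_. {-M..M}))"
  have "finite ?S" by (intro finite_imageI finite_PiE) auto
  moreover have "{d::real^'n. d \<in> int_lattice \<and> norm d \<le> R} \<subseteq> ?S"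
  proof
    fix d :: "real^'n" assume d: "d \<in> {d. d \<in> int_lattice \<and> norm d \<le> R}"
    have int: "\<And>i. d $ i \<in> \<int>" using d by (auto simp: int_lattice_def)
    have eq: "d = (\<chi> i. real_of_int (\<lfloor>d $ i\<rfloor>))"
      using int by (simp add: vec_eq_iff)
    have "\<And>i. \<lfloor>d $ i\<rfloor> \<in> {-M..M}"
    proof -
      fix i
      have "\<bar>d $ i\<bar> \<le> R" using component_le_norm_cart[of d i] d by auto
      then show "\<lfloor>d $ i\<rfloor> \<in> {-M..M}" unfolding M_def
        by (auto simp: floor_le_iff le_floor_iff) (linarith+)
    qed
    then have "(\<lambda>i. \<lfloor>d $ i\<rfloor>) \<in> PiE (UNIV::'n set) (\<lambda>_. {-M..M})" by (auto simp: PiE_iff)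
    then show "d \<in> ?S" using eq by (intro image_eqI[of _ _ "\<lambda>i. \<lfloor>d $ i\<rfloor>"]) auto
  qed
  ultimately show ?thesis by (rule finite_subset[rotated])
qed


lemma int_pos_or_zero:
  fixes g :: "real^'n \<Rightarrow> real"
  assumes g: "memLp q g"
  shows "0 < (\<integral>x. \<bar>g x\<bar> powr q \<partial>lebesgue) \<or> (AE x in lebesgue. g x = 0)"
proof -
  have "0 \<le> (\<integral>x. \<bar>g x\<bar> powr q \<partial>lebesgue)" by (rule integral_nonneg_AE) auto
  moreover have "(\<integral>x. \<bar>g x\<bar> powr q \<partial>lebesgue) = 0 \<Longrightarrow> AE x in lebesgue. g x = 0"
    by (rule int0_ae[OF memLp_meas[OF g] memLp_int[OF g]])
  ultimately show ?thesis by linarith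
qed

lemma pair_sep:
  fixes f g :: "real^'n \<Rightarrow> real"
  assumes q: "q \<ge> 1" and f: "memLp q f" and g: "memLp q g"
  shows "\<exists>c>0. \<forall>d\<in>int_lattice. \<not> ae_eq (\<lambda>x. f (x - d)) g \<longrightarrow> c \<le> Iq q f g d"
proof -
  have fm[measurable]: "f \<in> borel_measurable lebesgue" using memLp_meas[OF f] .
  have gm[measurable]: "g \<in> borel_measurable lebesgue" using memLp_meas[OF g] .
  show ?thesis
  proof (cases "(AE x in lebesgue. f x = 0) \<and> (AE x in lebesgue. g x = 0)")
    case True
    then show ?thesis using both_zero[OF fm gm] by (intro exI[of _ 1]) auto
  next
    case False
    have "\<exists>c>0. \<exists>R. \<forall>d. R \<le> norm d \<longrightarrow> c \<le> Iq q f g d"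
    proof (cases "0 < (\<integral>x. \<bar>g x\<bar> powr q \<partial>lebesgue)")
      case True
      then show ?thesis by (rule sep_far[OF q f g])
    next
      case gF: False
      then have "0 < (\<integral>x. \<bar>f x\<bar> powr q \<partial>lebesgue)"
        using False int_pos_or_zero[OF f] int_pos_or_zero[OF g] by auto
      then obtain c R where c: "c > 0" and cR: "\<forall>d. R \<le> norm d \<longrightarrow> c \<le> Iq q g f d"
        using sep_far[OF q g f] by blast
      have "\<forall>d. R \<le> norm d \<longrightarrow> c \<le> Iq q f g d"
      proof (intro allI impI)
        fix d :: "real^'n" assume "R \<le> norm d"
        then have "c \<le> Iq q g f (-d)" using cR by simp
        then show "c \<le> Iq q f g d" using Iq_swap[OF fm gm, of q d] by simp
      qed
      then show ?thesis using c by blast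
    qed
    then obtain c0 R where c0: "c0 > 0" and cR: "\<forall>d. R \<le> norm d \<longrightarrow> c0 \<le> Iq q f g d" by blast
    define S where "S = {d. d \<in> int_lattice \<and> norm d \<le> R \<and> \<not> ae_eq (\<lambda>x. f (x - d)) g}"
    have Sfin: "finite S" unfolding S_def
      by (rule finite_subset[OF _ lattice_ball_finite[of R]]) auto
    define c where "c = Min (insert c0 (Iq q f g ` S))"
    have cpos: "c > 0" unfolding c_def using Sfin c0
      by (subst Min_gr_iff) (auto simp: S_def intro!: Iq_pos[OF q f g])
    have "\<forall>d\<in>int_lattice. \<not> ae_eq (\<lambda>x. f (x - d)) g \<longrightarrow> c \<le> Iq q f g d"
    proof (intro ballI impI)
      fix d :: "real^'n" assume d: "d \<in> int_lattice" "\<not> ae_eq (\<lambda>x. f (x - d)) g"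
      show "c \<le> Iq q f g d"
      proof (cases "R \<le> norm d")
        case True
        have "c \<le> c0" unfolding c_def using Sfin by (intro Min_le) auto
        then show ?thesis using cR True by force
      next
        case False
        then have "d \<in> S" using d unfolding S_def by auto
        then show ?thesis unfolding c_def using Sfin by (intro Min_le) auto
      qed
    qed
    then show ?thesis using cpos by blast
  qed
qed


theorem lemma3p1:
  fixes p :: real and Q :: "real^'n \<Rightarrow> real"
    and R :: "(real^'n \<Rightarrow> real) \<Rightarrow> (real^'n \<Rightarrow> real)"
  assumes N2: "CARD('n) \<ge> 2"
    and p_low: "lower_crit CARD('n) < p"
    and p_up: "below_upper_crit CARD('n) p"
    and Q_Linf: "ess_bounded Q"
    and Q_nonneg: "\<forall>x. Q x \<ge> 0"
    and Q_nonzero: "\<not> ae_eq Q (\<lambda>x. 0)"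
    and Q_periodic: "\<forall>x. \<forall>y\<in>int_lattice. Q (x + y) = Q x"
    and R: "is_R p R"
    and finite_orbits: "\<exists>W. finite W \<and> W \<subseteq> crit_set p Q R \<and>
                           crit_set p Q R = (\<Union>w\<in>W. orbit w)"
  shows "\<exists>\<kappa>>0. \<forall>v\<in>crit_set p Q R. \<forall>w\<in>crit_set p Q R.
           \<not> ae_eq v w \<longrightarrow> Lp_norm (conj_exp p) (\<lambda>x. v x - w x) \<ge> \<kappa>"
proof -
  define q where "q = conj_exp p"
  have lc: "2 \<le> lower_crit CARD('n)"
    using N2 unfolding lower_crit_def by (simp add: field_simps)
  have p2: "p > 2" using lc p_low by linarith
  have q: "q \<ge> 1" unfolding q_def conj_exp_def using p2 by (simp add: field_simps)
  have q0: "q > 0" using q by simp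
  obtain W where Wfin: "finite W" and Wsub: "W \<subseteq> crit_set p Q R"
    and Weq: "crit_set p Q R = (\<Union>w\<in>W. orbit w)" using finite_orbits by blast
  have Wmem: "\<And>f. f \<in> W \<Longrightarrow> memLp q f" using Wsub unfolding crit_set_def q_def by auto
  define cc :: "(real^'n \<Rightarrow> real) \<Rightarrow> (real^'n \<Rightarrow> real) \<Rightarrow> real" where "cc = (\<lambda>f g. SOME c. c > 0 \<and> (\<forall>d\<in>int_lattice. \<not> ae_eq (\<lambda>x. f (x - d)) g \<longrightarrow> c \<le> Iq q f g d))"
  have cc: "cc f g > 0 \<and> (\<forall>d\<in>int_lattice. \<not> ae_eq (\<lambda>x. f (x - d)) g \<longrightarrow> cc f g \<le> Iq q f g d)"
    if "f \<in> W" "g \<in> W" for f g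
    unfolding cc_def by (rule someI_ex) (rule pair_sep[OF q Wmem[OF that(1)] Wmem[OF that(2)]])
  define \<kappa> where "\<kappa> = Min (insert 1 ((\<lambda>(f, g). cc f g powr (1/q)) ` (W \<times> W)))"
  have fin: "finite (insert 1 ((\<lambda>(f, g). cc f g powr (1/q)) ` (W \<times> W)))" using Wfin by simp
  have kpos: "\<kappa> > 0" unfolding \<kappa>_def using fin
    by (subst Min_gr_iff) (auto dest: cc)
  have "\<forall>v\<in>crit_set p Q R. \<forall>w\<in>crit_set p Q R.
           \<not> ae_eq v w \<longrightarrow> Lp_norm (conj_exp p) (\<lambda>x. v x - w x) \<ge> \<kappa>"
  proof (intro ballI impI)
    fix v w assume v: "v \<in> crit_set p Q R" and w: "w \<in> crit_set p Q R" and ne: "\<not> ae_eq v w"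
    have vm[measurable]: "v \<in> borel_measurable lebesgue" using v unfolding crit_set_def memLp_def by auto
    have wm[measurable]: "w \<in> borel_measurable lebesgue" using w unfolding crit_set_def memLp_def by auto
    obtain f where f: "f \<in> W" "v \<in> orbit f" using v Weq by auto
    obtain g where g: "g \<in> W" "w \<in> orbit g" using w Weq by auto
    obtain y where y: "y \<in> int_lattice" "AE x in lebesgue. v x = f (x - y)"
      using f(2) unfolding orbit_def ae_eq_def by auto
    obtain z where z: "z \<in> int_lattice" "AE x in lebesgue. w x = g (x - z)"
      using g(2) unfolding orbit_def ae_eq_def by auto
    have fm[measurable]: "f \<in> borel_measurable lebesgue" using memLp_meas[OF Wmem[OF f(1)]] .
    have gm[measurable]: "g \<in> borel_measurable lebesgue" using memLp_meas[OF Wmem[OF g(1)]] .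
    have fym[measurable]: "(\<lambda>x. f (x - y)) \<in> borel_measurable lebesgue" by (rule meas_transl(2)[OF fm])
    have gzm[measurable]: "(\<lambda>x. g (x - z)) \<in> borel_measurable lebesgue" by (rule meas_transl(2)[OF gm])
    have yz: "y - z \<in> int_lattice" using y(1) z(1) unfolding int_lattice_def by auto
    have neq: "\<not> ae_eq (\<lambda>x. f (x - (y - z))) g"
    proof
      assume "ae_eq (\<lambda>x. f (x - (y - z))) g"
      then have A: "AE x in lebesgue. f (x - (y - z)) = g x" unfolding ae_eq_def .
      have fyzm[measurable]: "(\<lambda>x. f (x - (y - z))) \<in> borel_measurable lebesgue" by (rule meas_transl(2)[OF fm])
      have "Measurable.pred lebesgue (\<lambda>x. f (x - (y - z)) = g x)" by measurable
      from AE_transl[OF this A, of "-z"] have "AE x in lebesgue. f (-z + x - (y - z)) = g (-z + x)" .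
      moreover have "\<And>x. -z + x - (y - z) = x - y" "\<And>x. -z + x = x - z" by (simp_all add: algebra_simps)
      ultimately have "AE x in lebesgue. f (x - y) = g (x - z)" by simp
      with y(2) z(2) have "ae_eq v w" unfolding ae_eq_def by eventually_elim simp
      with ne show False by simp
    qed
    have hm: "(\<lambda>x. \<bar>f (x - y) - g (x - z)\<bar> powr q) \<in> borel_measurable lebesgue" by measurable
    have "(\<integral>x. \<bar>v x - w x\<bar> powr q \<partial>lebesgue) = (\<integral>x. \<bar>f (x - y) - g (x - z)\<bar> powr q \<partial>lebesgue)"
      by (rule integral_cong_AE) (use y(2) z(2) in \<open>auto elim: AE_mp\<close>)
    also have "\<dots> = (\<integral>x. \<bar>f (z + x - y) - g (z + x - z)\<bar> powr q \<partial>lebesgue)"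
      using integral_transl[OF hm, of z] by (rule sym)
    also have "\<dots> = Iq q f g (y - z)"
      unfolding Iq_def by (simp add: algebra_simps)
    finally have I: "(\<integral>x. \<bar>v x - w x\<bar> powr q \<partial>lebesgue) = Iq q f g (y - z)" .
    have c: "cc f g > 0" "cc f g \<le> Iq q f g (y - z)" using cc[OF f(1) g(1)] yz neq by auto
    have "\<kappa> \<le> cc f g powr (1/q)" unfolding \<kappa>_def using fin f(1) g(1)
      by (intro Min_le) auto
    also have "\<dots> \<le> Iq q f g (y - z) powr (1/q)"
      using c q0 by (intro powr_mono2) auto
    also have "\<dots> = Lp_norm (conj_exp p) (\<lambda>x. v x - w x)"
      unfolding Lp_norm_def using I unfolding q_def by simp
    finally show "Lp_norm (conj_exp p) (\<lambda>x. v x - w x) \<ge> \<kappa>" .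
  qed
  then show ?thesis using kpos by blast
qed

end
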